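(* Let $G$ be a finite abelian group and let $k \in \mathbb{N}$. (1) Let $B$ be a zero-sum sequence over $G$ with $\max\mathsf{L}(B)=k+1$ and let $U$ be a minimal zero-sum sequence over $G$ with $U \mid B$. Then $\max\mathsf{L}(U^{-1}B)\le k$. Moreover, $\max\mathsf{L}(U^{-1}B) = k$ if and only if there exists some factorization $\zeta$ of $B$ of length $k+1$ in which $U$ occurs as a factor. (2) Let $M$ be the minimum of $|U|$ over all minimal zero-sum sequences $U$ that divide some zero-sum sequence $B$ over $G$ with $\max\mathsf{L}(B)=k+1$ and $|B|=\mathsf{D}_{k+1}(G)$. Then $\mathsf{D}_{k+1}(G)\le \mathsf{D}_k(G) + M$. (3) For each $\ell \in \mathbb{N}$, $\mathsf{D}_{k+1}(G) \le \max \{\mathsf{D}_k(G) + \ell, \mathsf{s}_{\le \ell}(G)-1\}$. In particular, if $\mathsf{D}_k(G) \ge \eta(G) - 1 -\exp(G)$, then $\mathsf{D}_{k+1}(G)\le \mathsf{D}_k(G) +\exp(G)$.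
   Context: $G$ is written additively. A sequence over $G$ is an element of the free abelian monoid over $G$ (a finite unordered list of elements with repetitions); $|S|$ denotes its length; $T\mid S$ means $T$ is a subsequence, and then $T^{-1}S$ is the sequence of remaining terms. A zero-sum sequence has terms summing to $0$; a minimal zero-sum sequence is a non-empty zero-sum sequence with no proper non-empty zero-sum subsequence. A factorization of a zero-sum sequence $B$ is a formal unordered product of minimal zero-sum sequences whose product is $B$; its length is the number of factors; $\mathsf{L}(B)$ is the set of lengths of factorizations of $B$. $\mathsf{D}_k(G)$ is the smallest $\ell$ such that every sequence of length at least $\ell$ has $k$ disjoint non-empty zero-sum subsequences (equivalently, the maximal length of a zero-sum sequence $B$ with $\max\mathsf{L}(B)\le k$). For $\ell\in\mathbb{N}$, $\mathsf{s}_{\le \ell}(G)\in\mathbb{N}\cup\{\infty\}$ is the smallest $n$ such that every sequence over $G$ of length at least $n$ has a non-empty zero-sum subsequence of length at most $\ell$; $\eta(G)=\mathsf{s}_{\le\exp(G)}(G)$. *)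

theory Defs
  imports Main "HOL-Library.Multiset" "HOL-Library.Extended_Nat"
begin

text \<open>Finite abelian groups are types of class ab_group_add and finite (the group is UNIV).
  Sequences over G are multisets over the type.\<close>

definition zero_sum :: "'a::ab_group_add multiset \<Rightarrow> bool" where
  "zero_sum S \<longleftrightarrow> sum_mset S = 0"

definition min_zero_sum :: "'a::ab_group_add multiset \<Rightarrow> bool" where
  "min_zero_sum U \<longleftrightarrow> U \<noteq> {#} \<and> sum_mset U = 0 \<and>
     (\<forall>T. T \<subseteq># U \<and> T \<noteq> {#} \<and> sum_mset T = 0 \<longrightarrow> T = U)"

definition factorization :: "'a::ab_group_add multiset multiset \<Rightarrow> 'a multiset \<Rightarrow> bool" where
  "factorization Z B \<longleftrightarrow> (\<forall>U\<in>#Z. min_zero_sum U) \<and> sum_mset Z = B"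

definition lengths :: "'a::ab_group_add multiset \<Rightarrow> nat set" where
  "lengths B = {size Z | Z. factorization Z B}"

definition maxL :: "'a::ab_group_add multiset \<Rightarrow> nat" where
  "maxL B = Max (lengths B)"

definition has_disjoint_zs :: "nat \<Rightarrow> 'a::ab_group_add multiset \<Rightarrow> bool" where
  "has_disjoint_zs k S \<longleftrightarrow> (\<exists>Z. size Z = k \<and> (\<forall>T\<in>#Z. T \<noteq> {#} \<and> sum_mset T = 0)
                                   \<and> sum_mset Z \<subseteq># S)"

definition Dk :: "'a::ab_group_add itself \<Rightarrow> nat \<Rightarrow> nat" where
  "Dk _ k = (LEAST l. \<forall>S::'a multiset. size S \<ge> l \<longrightarrow> has_disjoint_zs k S)"

text \<open>s_{<= l}(G) in N \<union> {\<infinity>} (Inf of the empty set of enat is \<infinity>).\<close>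
definition s_le :: "'a::ab_group_add itself \<Rightarrow> nat \<Rightarrow> enat" where
  "s_le _ l = Inf {enat n | n. \<forall>S::'a multiset. size S \<ge> n \<longrightarrow>
      (\<exists>T. T \<subseteq># S \<and> T \<noteq> {#} \<and> sum_mset T = 0 \<and> size T \<le> l)}"

definition nsmul :: "nat \<Rightarrow> 'a::ab_group_add \<Rightarrow> 'a" where
  "nsmul n g = sum_list (replicate n g)"

definition exp_grp :: "'a::ab_group_add itself \<Rightarrow> nat" where
  "exp_grp _ = (LEAST n. n > 0 \<and> (\<forall>g::'a. nsmul n g = 0))"

definition eta :: "'a::ab_group_add itself \<Rightarrow> enat" where
  "eta G = s_le G (exp_grp G)"

end

theory Submission
  imports Defs "HOL-Library.Multiset" "HOL-Library.Extended_Nat"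
begin


lemma mset_drop_sub: "mset (drop i zs) \<subseteq># mset zs"
  by (metis append_take_drop_id mset_append mset_subset_eq_add_right)

lemma mset_take_sub: "mset (take i zs) \<subseteq># mset zs"
  by (metis append_take_drop_id mset_append mset_subset_eq_add_left)

lemma sub_size: "m \<le> size M \<Longrightarrow> \<exists>N. N \<subseteq># M \<and> size N = m"
proof -
  assume a: "m \<le> size M"
  obtain xs where xs: "mset xs = M" using ex_mset by blast
  show ?thesis
    by (rule exI[of _ "mset (take m xs)"]) (use a xs mset_take_sub in auto)
qed

lemma zs_from_prefix:
  fixes ys :: "'a::ab_group_add list"
  assumes "i < j" "j \<le> length ys" "sum_list (take i ys) = sum_list (take j ys)"
  shows "\<exists>T. T \<subseteq># mset ys \<and> T \<noteq> {#} \<and> sum_mset T = 0 \<and> size T \<le> length ys"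
proof -
  have e: "take j ys = take i ys @ drop i (take j ys)"
    using assms(1) by (metis append_take_drop_id less_imp_le_nat min.absorb1 take_take)
  have s: "sum_list (drop i (take j ys)) = 0"
    using assms(3) e by (metis add_cancel_right_right sum_list_append)
  let ?T = "mset (drop i (take j ys))"
  have "?T \<subseteq># mset ys" using mset_drop_sub mset_take_sub subset_mset.order_trans by blast
  moreover have "?T \<noteq> {#}" using assms(1,2) by simp
  moreover have "sum_mset ?T = 0" using s by (simp add: sum_mset_sum_list)
  moreover have "size ?T \<le> length ys" by simp
  ultimately show ?thesis by blast
qed

lemma zs_short:
  fixes S :: "'a::{ab_group_add,finite} multiset"
  assumes "card (UNIV::'a set) \<le> size S"
  shows "\<exists>T. T \<subseteq># S \<and> T \<noteq> {#} \<and> sum_mset T = 0 \<and> size T \<le> card (UNIV::'a set)"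
proof -
  let ?N = "card (UNIV::'a set)"
  obtain xs where xs: "mset xs = S" using ex_mset by blast
  define ys where "ys = take ?N xs"
  have ly: "length ys = ?N" using assms xs unfolding ys_def by auto
  have ysub: "mset ys \<subseteq># S" using xs mset_take_sub unfolding ys_def by blast
  define f where "f i = sum_list (take i ys)" for i
  have "\<not> inj_on f {0..?N}"
  proof
    assume "inj_on f {0..?N}"
    then have "card {0..?N} \<le> card (UNIV::'a set)"
      using card_inj_on_le[of f "{0..?N}" UNIV] by simp
    then show False by simp
  qed
  then obtain i j where ij: "i \<in> {0..?N}" "j \<in> {0..?N}" "i \<noteq> j" "f i = f j"
    unfolding inj_on_def by blast
  show ?thesis
  proof (cases "i < j")
    case True
    then obtain T where "T \<subseteq># mset ys \<and> T \<noteq> {#} \<and> sum_mset T = 0 \<and> size T \<le> length ys"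
      using zs_from_prefix[of i j ys] ij ly unfolding f_def by auto
    then show ?thesis using ysub ly subset_mset.order_trans by metis
  next
    case False
    then have "j < i" using ij by simp
    then obtain T where "T \<subseteq># mset ys \<and> T \<noteq> {#} \<and> sum_mset T = 0 \<and> size T \<le> length ys"
      using zs_from_prefix[of j i ys] ij ly unfolding f_def by auto
    then show ?thesis using ysub ly subset_mset.order_trans by metis
  qed
qed

lemma Dk_exists:
  fixes S :: "'a::{ab_group_add,finite} multiset"
  shows "size S \<ge> k * card (UNIV::'a set) \<Longrightarrow> has_disjoint_zs k S"
proof (induction k arbitrary: S)
  case 0
  then show ?case unfolding has_disjoint_zs_def by (intro exI[of _ "{#}"]) auto
next
  case (Suc k)
  then have "card (UNIV::'a set) \<le> size S" by simp
  then obtain T where T: "T \<subseteq># S" "T \<noteq> {#}" "sum_mset T = 0" "size T \<le> card (UNIV::'a set)"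
    using zs_short by blast
  have "size (S - T) \<ge> k * card (UNIV::'a set)"
    using Suc.prems T(1,4) size_Diff_submset[OF T(1)] by simp
  then obtain Z where Z: "size Z = k" "\<forall>T\<in>#Z. T \<noteq> {#} \<and> sum_mset T = 0" "sum_mset Z \<subseteq># S - T"
    using Suc.IH unfolding has_disjoint_zs_def by blast
  have "sum_mset (add_mset T Z) \<subseteq># S"
    using Z(3) T(1) by (simp add: subset_mset.le_diff_conv2 add.commute)
  then show ?case unfolding has_disjoint_zs_def using Z T
    by (intro exI[of _ "add_mset T Z"]) auto
qed



lemma exists_min:
  fixes T :: "'a::ab_group_add multiset"
  assumes "T \<noteq> {#}" "sum_mset T = 0"
  shows "\<exists>U. min_zero_sum U \<and> U \<subseteq># T"
proof -
  define P where "P X \<longleftrightarrow> X \<subseteq># T \<and> X \<noteq> {#} \<and> sum_mset X = 0" for X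
  have "P T" using assms unfolding P_def by simp
  obtain U where U: "P U" "\<And>X. P X \<Longrightarrow> size U \<le> size X"
    using ex_has_least_nat[of P T size] \<open>P T\<close> by blast
  have "min_zero_sum U" unfolding min_zero_sum_def
  proof (intro conjI allI impI)
    show "U \<noteq> {#}" "sum_mset U = 0" using U(1) unfolding P_def by auto
    fix X assume X: "X \<subseteq># U \<and> X \<noteq> {#} \<and> sum_mset X = 0"
    then have "P X" using U(1) unfolding P_def by auto
    then have "size U \<le> size X" by (rule U(2))
    then show "X = U" using X
      by (metis leD mset_subset_size subset_mset.le_imp_less_or_eq)
  qed
  then show ?thesis using U(1) unfolding P_def by blast
qed

lemma fact_exists:
  fixes B :: "'a::ab_group_add multiset"
  shows "sum_mset B = 0 \<Longrightarrow> \<exists>Z. factorization Z B"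
proof (induction "size B" arbitrary: B rule: less_induct)
  case less
  show ?case
  proof (cases "B = {#}")
    case True
    then show ?thesis unfolding factorization_def by (intro exI[of _ "{#}"]) auto
  next
    case False
    obtain U where U: "min_zero_sum U" "U \<subseteq># B" using exists_min False less.prems by blast
    have Une: "U \<noteq> {#}" "sum_mset U = 0" using U(1) unfolding min_zero_sum_def by auto
    have "sum_mset (B - U) = 0"
      using U(2) Une less.prems by (metis add_cancel_right_left subset_mset.diff_add sum_mset.union)
    moreover have "size (B - U) < size B"
      using U(2) Une(1) size_Diff_submset[OF U(2)]
      by (metis diff_less nonempty_has_size not_gr_zero size_mset_mono zero_less_iff_neq_zero False)
    ultimately obtain Z where "factorization Z (B - U)" using less.hyps by blast
    then have "factorization (add_mset U Z) B"
      using U unfolding factorization_def by (auto simp: subset_mset.add_diff_inverse)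
    then show ?thesis by blast
  qed
qed

lemma fact_size: "factorization Z B \<Longrightarrow> size Z \<le> size B"
proof (induction Z arbitrary: B)
  case empty
  then show ?case by simp
next
  case (add U Z)
  have "min_zero_sum U" using add.prems unfolding factorization_def by auto
  then have "size U \<ge> 1" unfolding min_zero_sum_def by (simp add: Suc_leI nonempty_has_size)
  moreover have "factorization Z (sum_mset Z)" using add.prems unfolding factorization_def by auto
  ultimately show ?case using add.IH add.prems unfolding factorization_def by fastforce
qed

lemma lengths_fin: "finite (lengths B)"
proof -
  have "lengths B \<subseteq> {0..size B}" unfolding lengths_def using fact_size by fastforce
  then show ?thesis using finite_subset by blast
qed

lemma lengths_ne: "zero_sum B \<Longrightarrow> lengths B \<noteq> {}"
  unfolding lengths_def zero_sum_def using fact_exists by blast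

lemma maxL_ge: "zero_sum B \<Longrightarrow> factorization Z B \<Longrightarrow> size Z \<le> maxL B"
  unfolding maxL_def using lengths_fin unfolding lengths_def by (auto intro: Max_ge)

lemma maxL_attained: "zero_sum B \<Longrightarrow> \<exists>Z. factorization Z B \<and> size Z = maxL B"
proof -
  assume "zero_sum B"
  then have "maxL B \<in> lengths B" unfolding maxL_def using lengths_fin lengths_ne Max_in by blast
  then show ?thesis unfolding lengths_def by auto
qed

lemma maxL_le: "zero_sum B \<Longrightarrow> (\<And>Z. factorization Z B \<Longrightarrow> size Z \<le> m) \<Longrightarrow> maxL B \<le> m"
  using maxL_attained by metis

lemma fact_union: "factorization Z1 B1 \<Longrightarrow> factorization Z2 B2 \<Longrightarrow> factorization (Z1 + Z2) (B1 + B2)"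
  unfolding factorization_def by auto

lemma fact_ne: "factorization Z B \<Longrightarrow> B \<noteq> {#} \<Longrightarrow> size Z \<ge> 1"
  unfolding factorization_def by (cases Z) auto

lemma lemL:
  fixes Z :: "'a::ab_group_add multiset multiset"
  shows "(\<forall>T\<in>#Z. T \<noteq> {#} \<and> sum_mset T = 0) \<Longrightarrow> \<exists>F. factorization F (sum_mset Z) \<and> size F \<ge> size Z"
proof (induction Z)
  case empty
  then show ?case unfolding factorization_def by (intro exI[of _ "{#}"]) auto
next
  case (add T Z)
  then obtain F where F: "factorization F (sum_mset Z)" "size F \<ge> size Z" by auto
  obtain FT where FT: "factorization FT T" using add.prems fact_exists by auto
  have "size FT \<ge> 1" using fact_ne FT add.prems by auto
  then show ?case using fact_union[OF FT F(1)] F(2) by (intro exI[of _ "FT + F"]) auto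
qed



lemma sum_mset_mono_sub: "N \<subseteq># M \<Longrightarrow> sum_mset N \<subseteq># sum_mset (M :: 'b multiset multiset)"
  by (metis mset_subset_eq_add_left subset_mset.add_diff_inverse sum_mset.union)

lemma hdz_shrink:
  assumes "size Z \<ge> k" "\<forall>T\<in>#Z. T \<noteq> {#} \<and> sum_mset T = 0" "sum_mset Z \<subseteq># S"
  shows "has_disjoint_zs k S"
proof -
  obtain Z' where Z': "Z' \<subseteq># Z" "size Z' = k" using sub_size assms(1) by blast
  have "sum_mset Z' \<subseteq># S" using sum_mset_mono_sub[OF Z'(1)] assms(3) by (rule subset_mset.order_trans)
  then show ?thesis unfolding has_disjoint_zs_def using Z' assms(2)
    by (intro exI[of _ Z']) (auto dest: mset_subset_eqD)
qed

lemma hdz_mono: "S' \<subseteq># S \<Longrightarrow> has_disjoint_zs k S' \<Longrightarrow> has_disjoint_zs k S"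
  unfolding has_disjoint_zs_def using subset_mset.order_trans by blast

lemma in_sum_mset: "x \<in># sum_mset Z \<Longrightarrow> \<exists>T\<in>#Z. x \<in># T"
  by (induction Z) auto

lemma lemK:
  assumes "\<forall>T\<in>#Z. T \<noteq> {#} \<and> sum_mset T = 0" "size Z \<ge> k + 1" "sum_mset Z \<subseteq># add_mset g S"
  shows "has_disjoint_zs k S"
proof (cases "g \<in># sum_mset Z")
  case True
  then obtain T where T: "T \<in># Z" "g \<in># T" using in_sum_mset by blast
  obtain Z' where Z': "Z = add_mset T Z'" using multi_member_split[OF T(1)] by blast
  have e: "sum_mset Z = T + sum_mset Z'" using Z' by simp
  have "sum_mset Z' \<subseteq># S"
    unfolding subseteq_mset_def
  proof
    fix x
    have h: "count (sum_mset Z) x \<le> count (add_mset g S) x"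
      using assms(3) by (rule mset_subset_eq_count)
    have h2: "count (sum_mset Z) x = count T x + count (sum_mset Z') x"
      unfolding e by (rule count_union)
    show "count (sum_mset Z') x \<le> count S x"
    proof (cases "x = g")
      case True
      have c1: "count T x \<ge> 1" using T(2) True by (simp add: Suc_le_eq)
      have h': "count (add_mset g S) x = count S x + 1" using True by simp
      show ?thesis using h h2 h' c1 by linarith
    next
      case False
      then show ?thesis using h h2 by simp
    qed
  qed
  moreover have "size Z' \<ge> k" using assms(2) Z' by simp
  moreover have "\<forall>T\<in>#Z'. T \<noteq> {#} \<and> sum_mset T = 0" using assms(1) Z' by simp
  ultimately show ?thesis using hdz_shrink by blast
next
  case False
  have "sum_mset Z \<subseteq># S"
    unfolding subseteq_mset_def
  proof
    fix x
    have h: "count (sum_mset Z) x \<le> count (add_mset g S) x"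
      using assms(3) by (rule mset_subset_eq_count)
    show "count (sum_mset Z) x \<le> count S x"
    proof (cases "x = g")
      case True
      then have "count (sum_mset Z) x = 0" using False by (simp add: count_eq_zero_iff)
      then show ?thesis by simp
    next
      case False
      then show ?thesis using h by simp
    qed
  qed
  moreover have "size Z \<ge> k" using assms(2) by simp
  ultimately show ?thesis using hdz_shrink assms(1) by blast
qed

lemma Dk_prop:
  fixes S :: "'a::{ab_group_add,finite} multiset"
  shows "size S \<ge> Dk TYPE('a) k \<Longrightarrow> has_disjoint_zs k S"
proof -
  have "\<forall>S::'a multiset. size S \<ge> Dk TYPE('a) k \<longrightarrow> has_disjoint_zs k S"
    unfolding Dk_def by (rule LeastI_ex) (use Dk_exists in blast)
  then show "size S \<ge> Dk TYPE('a) k \<Longrightarrow> has_disjoint_zs k S" by blast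
qed

lemma Dk_min:
  assumes "l < Dk TYPE('a::{ab_group_add,finite}) k"
  shows "\<exists>S::'a multiset. size S \<ge> l \<and> \<not> has_disjoint_zs k S"
  using not_less_Least[OF assms[unfolded Dk_def]] by blast

lemma T_sub_sum: "T \<in># Z \<Longrightarrow> T \<subseteq># sum_mset Z"
proof -
  assume "T \<in># Z"
  then obtain Z' where "Z = add_mset T Z'" using multi_member_split[of T Z] by auto
  then show ?thesis by simp
qed

lemma hdz_pos: "k \<ge> 1 \<Longrightarrow> \<not> has_disjoint_zs k {#}"
proof
  assume "k \<ge> 1" "has_disjoint_zs k {#}"
  then obtain Z where Z: "size Z = k" "\<forall>T\<in>#Z. T \<noteq> {#} \<and> sum_mset T = 0" "sum_mset Z \<subseteq># {#}"
    unfolding has_disjoint_zs_def by auto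
  have "Z \<noteq> {#}" using Z(1) \<open>k \<ge> 1\<close> by auto
  then obtain T where T: "T \<in># Z" by blast
  have "T \<subseteq># {#}" using T_sub_sum[OF T] Z(3) by (rule subset_mset.order_trans)
  then have "T = {#}" by simp
  then show False using Z(2) T by blast
qed



context
  fixes ty :: "'a::{ab_group_add,finite} itself"
begin

lemma Dk_pos: "k \<ge> 1 \<Longrightarrow> Dk TYPE('a) k \<ge> 1"
proof (rule ccontr)
  assume k: "k \<ge> 1" and "\<not> Dk TYPE('a) k \<ge> 1"
  then have "size ({#}::'a multiset) \<ge> Dk TYPE('a) k" by simp
  then have "has_disjoint_zs k ({#}::'a multiset)" by (rule Dk_prop)
  then show False using hdz_pos[OF k] by blast
qed

lemma Dk_witness:
  assumes "k \<ge> 1"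
  shows "\<exists>S::'a multiset. size S = Dk TYPE('a) k - 1 \<and> \<not> has_disjoint_zs k S"
proof -
  have "Dk TYPE('a) k - 1 < Dk TYPE('a) k" using Dk_pos[OF assms] by simp
  then obtain S :: "'a multiset" where S: "size S \<ge> Dk TYPE('a) k - 1" "\<not> has_disjoint_zs k S"
    using Dk_min[of "Dk TYPE('a) k - 1" k] by blast
  obtain S' where S': "S' \<subseteq># S" "size S' = Dk TYPE('a) k - 1" using sub_size S(1) by blast
  have "\<not> has_disjoint_zs k S'" using hdz_mono[OF S'(1)] S(2) by blast
  then show ?thesis using S'(2) by blast
qed

lemma fact_elems: "factorization F B \<Longrightarrow> \<forall>T\<in>#F. T \<noteq> {#} \<and> sum_mset T = 0"
  unfolding factorization_def min_zero_sum_def by auto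

lemma lemA:
  fixes B :: "'a multiset"
  assumes "zero_sum B" "maxL B \<le> k"
  shows "size B \<le> Dk TYPE('a) k"
proof (rule ccontr)
  assume nt: "\<not> size B \<le> Dk TYPE('a) k"
  then have "B \<noteq> {#}" by auto
  then obtain b where b: "b \<in># B" by blast
  let ?S = "B - {#b#}"
  have "size ?S \<ge> Dk TYPE('a) k" using nt b by (simp add: size_Diff_singleton)
  then obtain Z where Z: "size Z = k" "\<forall>T\<in>#Z. T \<noteq> {#} \<and> sum_mset T = 0" "sum_mset Z \<subseteq># ?S"
    using Dk_prop unfolding has_disjoint_zs_def by blast
  let ?R = "B - sum_mset Z"
  have sub: "sum_mset Z \<subseteq># B" using Z(3) by (meson diff_subset_eq_self subset_mset.order_trans)
  have "b \<in># ?R"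
  proof -
    have c: "count (sum_mset Z) b \<le> count (B - {#b#}) b" using mset_subset_eq_count[OF Z(3), of b] by simp
    have c2: "count B b \<ge> 1" using b by (simp add: Suc_le_eq)
    have c3: "count (B - {#b#}) b = count B b - 1" by simp
    show ?thesis unfolding in_diff_count using c c2 c3 by linarith
  qed
  then have Rne: "?R \<noteq> {#}" by auto
  have sZ: "sum_mset (sum_mset Z) = 0" using Z(2) by (induction Z) auto
  have eBR: "?R + sum_mset Z = B" using sub by (rule subset_mset.diff_add)
  have "sum_mset ?R + sum_mset (sum_mset Z) = sum_mset B" using eBR sum_mset.union by metis
  then have "sum_mset ?R = 0" using sZ assms(1) unfolding zero_sum_def by simp
  then have "\<forall>T\<in>#add_mset ?R Z. T \<noteq> {#} \<and> sum_mset T = 0" using Z(2) Rne by auto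
  then obtain F where F0: "factorization F (sum_mset (add_mset ?R Z))" "size F \<ge> size (add_mset ?R Z)"
    using lemL by blast
  have F: "factorization F (sum_mset (add_mset ?R Z))" "size F \<ge> k + 1" using F0 Z(1) by auto
  have "sum_mset (add_mset ?R Z) = B" using eBR by simp
  then have "factorization F B" using F(1) by simp
  then have "size F \<le> maxL B" by (rule maxL_ge[OF assms(1)])
  then have "k + 1 \<le> maxL B" using F(2) by simp
  then show False using assms(2) by simp
qed

lemma lemB:
  assumes "k \<ge> 1"
  shows "\<exists>B::'a multiset. zero_sum B \<and> size B = Dk TYPE('a) k \<and> maxL B \<le> k"
proof -
  obtain S :: "'a multiset" where S: "size S = Dk TYPE('a) k - 1" "\<not> has_disjoint_zs k S"
    using Dk_witness[OF assms] by blast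
  let ?B = "add_mset (- sum_mset S) S"
  have zs: "zero_sum ?B" unfolding zero_sum_def by simp
  have "size ?B = Dk TYPE('a) k" using S(1) Dk_pos[OF assms] by simp
  moreover have "maxL ?B \<le> k"
  proof (rule maxL_le[OF zs])
    fix F assume F: "factorization F ?B"
    show "size F \<le> k"
    proof (rule ccontr)
      assume "\<not> size F \<le> k"
      then have s1: "size F \<ge> k + 1" by simp
      have s2: "sum_mset F \<subseteq># add_mset (- sum_mset S) S" using F unfolding factorization_def by simp
      have "has_disjoint_zs k S" by (rule lemK[OF fact_elems[OF F] s1 s2])
      then show False using S(2) by blast
    qed
  qed
  ultimately show ?thesis using zs by blast
qed

lemma lemC:
  assumes "k \<ge> 1"
  shows "Dk TYPE('a) (k + 1) \<ge> Dk TYPE('a) k + 1"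
proof (rule ccontr)
  assume nt: "\<not> Dk TYPE('a) (k + 1) \<ge> Dk TYPE('a) k + 1"
  obtain S :: "'a multiset" where S: "size S = Dk TYPE('a) k - 1" "\<not> has_disjoint_zs k S"
    using Dk_witness[OF assms] by blast
  have "size (add_mset 0 S) \<ge> Dk TYPE('a) (k + 1)" using S(1) Dk_pos[OF assms] nt by simp
  then obtain Z where Z: "size Z = k + 1" "\<forall>T\<in>#Z. T \<noteq> {#} \<and> sum_mset T = 0" "sum_mset Z \<subseteq># add_mset 0 S"
    using Dk_prop unfolding has_disjoint_zs_def by blast
  then have "has_disjoint_zs k S" using lemK[OF Z(2) _ Z(3)] by simp
  then show False using S(2) by blast
qed

lemma part1:
  fixes B U :: "'a multiset"
  assumes "zero_sum B" "maxL B = k + 1" "min_zero_sum U" "U \<subseteq># B"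
  shows "maxL (B - U) \<le> k \<and>
          (maxL (B - U) = k \<longleftrightarrow> (\<exists>Z. factorization Z B \<and> size Z = k + 1 \<and> U \<in># Z))"
proof -
  have zU: "sum_mset U = 0" using assms(3) unfolding min_zero_sum_def by auto
  have eB: "U + (B - U) = B" using assms(4) by (simp add: subset_mset.add_diff_inverse)
  have "sum_mset U + sum_mset (B - U) = sum_mset B" using eB sum_mset.union by metis
  then have zR: "zero_sum (B - U)" using assms(1) zU unfolding zero_sum_def by simp
  have fU: "factorization {#U#} U" using assms(3) unfolding factorization_def by auto
  have ext: "factorization (add_mset U Z) B" if "factorization Z (B - U)" for Z
    using fact_union[OF fU that] eB by simp
  have le: "maxL (B - U) \<le> k"
  proof (rule maxL_le[OF zR])
    fix Z assume "factorization Z (B - U)"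
    then have "size (add_mset U Z) \<le> k + 1" using maxL_ge[OF assms(1) ext] assms(2) by metis
    then show "size Z \<le> k" by simp
  qed
  moreover have "maxL (B - U) = k \<longleftrightarrow> (\<exists>Z. factorization Z B \<and> size Z = k + 1 \<and> U \<in># Z)"
  proof
    assume "maxL (B - U) = k"
    then obtain Z where "factorization Z (B - U)" "size Z = k" using maxL_attained[OF zR] by metis
    then show "\<exists>Z. factorization Z B \<and> size Z = k + 1 \<and> U \<in># Z" using ext by fastforce
  next
    assume "\<exists>Z. factorization Z B \<and> size Z = k + 1 \<and> U \<in># Z"
    then obtain Z where Z: "factorization Z B" "size Z = k + 1" "U \<in># Z" by blast
    obtain Z' where Z': "Z = add_mset U Z'" using multi_member_split[OF Z(3)] by blast
    have "factorization Z' (B - U)" using Z(1) unfolding factorization_def Z' by auto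
    moreover have "size Z' = k" using Z(2) Z' by simp
    ultimately have "k \<le> maxL (B - U)" using maxL_ge[OF zR] by metis
    then show "maxL (B - U) = k" using le by simp
  qed
  ultimately show ?thesis by blast
qed

lemma lemE:
  fixes B U :: "'a multiset"
  assumes "zero_sum B" "maxL B = k + 1" "min_zero_sum U" "U \<subseteq># B"
  shows "size B \<le> Dk TYPE('a) k + size U"
proof -
  have zU: "sum_mset U = 0" using assms(3) unfolding min_zero_sum_def by auto
  have eB: "U + (B - U) = B" using assms(4) by (simp add: subset_mset.add_diff_inverse)
  have "sum_mset U + sum_mset (B - U) = sum_mset B" using eB sum_mset.union by metis
  then have zR: "zero_sum (B - U)" using assms(1) zU unfolding zero_sum_def by simp
  have "size (B - U) \<le> Dk TYPE('a) k" using lemA[OF zR] part1[OF assms] by blast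
  moreover have "size U + size (B - U) = size B" using eB size_union by metis
  ultimately show ?thesis by linarith
qed

lemma B0:
  assumes "k \<ge> 1"
  shows "\<exists>B::'a multiset. zero_sum B \<and> size B = Dk TYPE('a) (k+1) \<and> maxL B = k + 1"
proof -
  obtain B :: "'a multiset" where B: "zero_sum B" "size B = Dk TYPE('a) (k+1)" "maxL B \<le> k + 1"
    using lemB[of "k+1"] by auto
  have "\<not> maxL B \<le> k"
  proof
    assume "maxL B \<le> k"
    then have "size B \<le> Dk TYPE('a) k" using lemA B(1) by blast
    then show False using lemC[OF assms] B(2) by simp
  qed
  then show ?thesis using B by (intro exI[of _ B]) auto
qed

end



lemma part3:
  fixes k l :: nat
  assumes "k \<ge> 1"
  shows "enat (Dk TYPE('a::{ab_group_add,finite}) (k + 1)) \<le> max (enat (Dk TYPE('a) k + l)) (s_le TYPE('a) l - 1)"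
proof -
  define A where "A = {enat n | n. \<forall>S::'a multiset. size S \<ge> n \<longrightarrow>
      (\<exists>T. T \<subseteq># S \<and> T \<noteq> {#} \<and> sum_mset T = 0 \<and> size T \<le> l)}"
  have sA: "s_le TYPE('a) l = Inf A" unfolding s_le_def A_def by simp
  show ?thesis
  proof (cases "A = {}")
    case True
    then have "s_le TYPE('a) l = \<infinity>" using sA by (simp add: Inf_enat_def)
    then show ?thesis by simp
  next
    case False
    then have "Inf A \<in> A" unfolding Inf_enat_def using LeastI_ex by (metis (mono_tags) ex_in_conv)
    then obtain n where n: "s_le TYPE('a) l = enat n" and Q: "\<forall>S::'a multiset. size S \<ge> n \<longrightarrow>
      (\<exists>T. T \<subseteq># S \<and> T \<noteq> {#} \<and> sum_mset T = 0 \<and> size T \<le> l)"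
      using sA unfolding A_def by auto
    obtain B :: "'a multiset" where B: "zero_sum B" "size B = Dk TYPE('a) (k+1)" "maxL B = k + 1"
      using B0[OF assms] by blast
    show ?thesis
    proof (cases "Dk TYPE('a) (k+1) \<ge> n")
      case True
      then obtain T where T: "T \<subseteq># B" "T \<noteq> {#}" "sum_mset T = 0" "size T \<le> l" using Q B(2) by metis
      obtain U where U: "min_zero_sum U" "U \<subseteq># T" using exists_min T(2,3) by blast
      have "U \<subseteq># B" using U(2) T(1) by (rule subset_mset.order_trans)
      then have "size B \<le> Dk TYPE('a) k + size U" using lemE B U(1) by blast
      moreover have "size U \<le> l" using size_mset_mono[OF U(2)] T(4) by simp
      ultimately have "Dk TYPE('a) (k+1) \<le> Dk TYPE('a) k + l" using B(2) by simp
      then have "enat (Dk TYPE('a) (k+1)) \<le> enat (Dk TYPE('a) k + l)" by simp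
      then show ?thesis by (rule max.coboundedI1)
    next
      case False
      then have "Dk TYPE('a) (k+1) \<le> n - 1" by simp
      moreover have "s_le TYPE('a) l - 1 = enat (n - 1)" using n by (simp add: one_enat_def)
      ultimately show ?thesis by simp
    qed
  qed
qed

theorem proposition3p1:
  fixes k :: nat
  assumes "k \<ge> 1"
  shows
   "(\<forall>(B::'a::{ab_group_add,finite} multiset) U.
        zero_sum B \<and> maxL B = k + 1 \<and> min_zero_sum U \<and> U \<subseteq># B \<longrightarrow>
          maxL (B - U) \<le> k \<and>
          (maxL (B - U) = k \<longleftrightarrow> (\<exists>Z. factorization Z B \<and> size Z = k + 1 \<and> U \<in># Z)))
    \<and> Dk TYPE('a) (k + 1) \<le> Dk TYPE('a) k +
        Min {size U | (U::'a multiset) B. min_zero_sum U \<and> U \<subseteq># B \<and> zero_sum B \<and>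
                           maxL B = k + 1 \<and> size B = Dk TYPE('a) (k + 1)}
    \<and> (\<forall>l::nat. l \<ge> 1 \<longrightarrow>
          enat (Dk TYPE('a) (k + 1)) \<le> max (enat (Dk TYPE('a) k + l)) (s_le TYPE('a) l - 1))
    \<and> (enat (Dk TYPE('a) k) \<ge> eta TYPE('a) - 1 - enat (exp_grp TYPE('a)) \<longrightarrow>
          Dk TYPE('a) (k + 1) \<le> Dk TYPE('a) k + exp_grp TYPE('a))"
proof (intro conjI)
  show "\<forall>(B::'a multiset) U.
        zero_sum B \<and> maxL B = k + 1 \<and> min_zero_sum U \<and> U \<subseteq># B \<longrightarrow>
          maxL (B - U) \<le> k \<and>
          (maxL (B - U) = k \<longleftrightarrow> (\<exists>Z. factorization Z B \<and> size Z = k + 1 \<and> U \<in># Z))"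
    using part1 by blast
next
  define M where "M = {size U | (U::'a multiset) B. min_zero_sum U \<and> U \<subseteq># B \<and> zero_sum B \<and>
                           maxL B = k + 1 \<and> size B = Dk TYPE('a) (k + 1)}"
  obtain B :: "'a multiset" where B: "zero_sum B" "size B = Dk TYPE('a) (k+1)" "maxL B = k + 1"
    using B0[OF assms] by blast
  have "B \<noteq> {#}" using B(2) Dk_pos[where 'a='a, of "k+1"] assms by auto
  then obtain U where U: "min_zero_sum U" "U \<subseteq># B" using exists_min B(1) unfolding zero_sum_def by blast
  have ne: "M \<noteq> {}" unfolding M_def using U B by blast
  have "M \<subseteq> {0..Dk TYPE('a) (k + 1)}" unfolding M_def using size_mset_mono by fastforce
  then have fin: "finite M" using finite_subset by blast
  have "Min M \<in> M" using Min_in[OF fin ne] .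
  then obtain U' B' :: "'a multiset" where UB: "Min M = size U'" "min_zero_sum U'" "U' \<subseteq># B'" "zero_sum B'"
    "maxL B' = k + 1" "size B' = Dk TYPE('a) (k + 1)" unfolding M_def mem_Collect_eq by blast
  have "size B' \<le> Dk TYPE('a) k + size U'" using lemE UB by blast
  then show "Dk TYPE('a) (k + 1) \<le> Dk TYPE('a) k + Min M" using UB by simp
next
  show "\<forall>l::nat. l \<ge> 1 \<longrightarrow>
          enat (Dk TYPE('a) (k + 1)) \<le> max (enat (Dk TYPE('a) k + l)) (s_le TYPE('a) l - 1)"
    using part3[OF assms] by blast
next
  show "enat (Dk TYPE('a) k) \<ge> eta TYPE('a) - 1 - enat (exp_grp TYPE('a)) \<longrightarrow>
          Dk TYPE('a) (k + 1) \<le> Dk TYPE('a) k + exp_grp TYPE('a)"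
  proof
    let ?e = "exp_grp TYPE('a)"
    assume c: "enat (Dk TYPE('a) k) \<ge> eta TYPE('a) - 1 - enat ?e"
    have h: "enat (Dk TYPE('a) (k + 1)) \<le> max (enat (Dk TYPE('a) k + ?e)) (eta TYPE('a) - 1)"
      using part3[OF assms, of ?e] unfolding eta_def by blast
    show "Dk TYPE('a) (k + 1) \<le> Dk TYPE('a) k + ?e"
    proof (cases "eta TYPE('a)")
      case (enat m)
      then have "m - 1 - ?e \<le> Dk TYPE('a) k" using c by (simp add: one_enat_def)
      moreover have "Dk TYPE('a) (k + 1) \<le> max (Dk TYPE('a) k + ?e) (m - 1)"
        using h enat by (simp add: one_enat_def)
      ultimately show ?thesis by simp
    next
      case infinity
      then show ?thesis using c by simp
    qed
  qed
qed


end
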